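(* Let $m,n,p\in\mathbb N^+$, let $G=(V,E)$ be a graph, and let $A,B\subseteq V$ be disjoint such that $|N(u)\cap B|\ge p$ for every $u\in A$. If $|A|>(m-1)(n-1)^p$, then (i) there are $m$ vertices $u_1,\ldots,u_m\in A$ and $p$ vertices $v_1,\ldots,v_p\in B$ with $\{u_i,v_j\}\in E$ for all $i\in[m]$, $j\in[p]$, or (ii) there are $n$ vertices $u_1,\ldots,u_n\in A$ and $n$ vertices $v_1,\ldots,v_n\in B$ such that for all $i,j\in[n]$, $\{u_i,v_j\}\in E$ if and only if $i=j$.
   Context: All graphs are simple. $N(u)$ denotes the set of neighbors of $u$ in $G$. $[n]=\{1,\dots,n\}$. *)

theory Defs
  imports Main
begin

definition simple_graph :: "'a set \<Rightarrow> ('a \<Rightarrow> 'a \<Rightarrow> bool) \<Rightarrow> bool" where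
  "simple_graph V E \<longleftrightarrow> finite V \<and> (\<forall>u v. E u v \<longrightarrow> u \<in> V \<and> v \<in> V)
     \<and> (\<forall>u v. E u v \<longrightarrow> E v u) \<and> (\<forall>u. \<not> E u u)"

definition nbhd :: "('a \<Rightarrow> 'a \<Rightarrow> bool) \<Rightarrow> 'a \<Rightarrow> 'a set" where
  "nbhd E u = {v. E u v}"

end

theory Submission
  imports Defs
begin

definition biclq :: "('a \<Rightarrow> 'a \<Rightarrow> bool) \<Rightarrow> 'a set \<Rightarrow> 'a set \<Rightarrow> nat \<Rightarrow> nat \<Rightarrow> bool" where
 "biclq E A B m p \<longleftrightarrow> (\<exists>us vs. inj_on us {1..m} \<and> us ` {1..m} \<subseteq> A \<and>
                 inj_on vs {1..p} \<and> vs ` {1..p} \<subseteq> B \<and>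
                 (\<forall>i\<in>{1..m}. \<forall>j\<in>{1..p}. E (us i) (vs j)))"

definition indm :: "('a \<Rightarrow> 'a \<Rightarrow> bool) \<Rightarrow> 'a set \<Rightarrow> 'a set \<Rightarrow> nat \<Rightarrow> bool" where
 "indm E A B n \<longleftrightarrow> (\<exists>us vs. inj_on us {1..n} \<and> us ` {1..n} \<subseteq> A \<and>
                 inj_on vs {1..n} \<and> vs ` {1..n} \<subseteq> B \<and>
                 (\<forall>i\<in>{1..n}. \<forall>j\<in>{1..n}. E (us i) (vs j) \<longleftrightarrow> i = j))"

lemma biclq_mono: "biclq E A B m p \<Longrightarrow> A \<subseteq> A' \<Longrightarrow> B \<subseteq> B' \<Longrightarrow> biclq E A' B' m p"
  unfolding biclq_def by (elim exE conjE, intro exI conjI) (assumption | erule (1) subset_trans)+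

lemma indm_mono: "indm E A B n \<Longrightarrow> A \<subseteq> A' \<Longrightarrow> B \<subseteq> B' \<Longrightarrow> indm E A' B' n"
  unfolding indm_def by (elim exE conjE, intro exI conjI) (assumption | erule (1) subset_trans)+

lemma biclq_p0:
  assumes "finite A" "m \<le> card A"
  shows "biclq E A B m 0"
proof -
  obtain C where C: "C \<subseteq> A" "card C = m" "finite C"
    using obtain_subset_with_card_n[OF assms(2)] by metis
  then obtain h where "bij_betw h {1..card C} C" using ex_bij_betw_nat_finite_1 by blast
  then show ?thesis unfolding biclq_def using C by (auto simp: bij_betw_def)
qed

lemma indm_1: "E u v \<Longrightarrow> u \<in> A \<Longrightarrow> v \<in> B \<Longrightarrow> indm E A B (Suc 0)"
  unfolding indm_def
  by (rule exI[of _ "\<lambda>_. u"], rule exI[of _ "\<lambda>_. v"]) simp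

lemma ext_fun:
  assumes "inj_on f {1..k}" "f ` {1..k} \<subseteq> X" "x \<notin> X"
  shows "inj_on (\<lambda>j. if j = Suc k then x else f j) {1..Suc k}"
    "(\<lambda>j. if j = Suc k then x else f j) ` {1..Suc k} = insert x (f ` {1..k})"
proof -
  let ?g = "\<lambda>j. if j = Suc k then x else f j"
  have e: "{1..Suc k} = insert (Suc k) {1..k}" by auto
  have im: "?g ` {1..k} = f ` {1..k}" by (rule image_cong[OF refl]) simp
  have "inj_on ?g {1..k} = inj_on f {1..k}" by (rule inj_on_cong) simp
  then have "inj_on ?g {1..k}" using assms(1) by simp
  moreover have "?g (Suc k) \<notin> ?g ` {1..k}" using im assms(2,3) by auto
  ultimately show "inj_on ?g {1..Suc k}" unfolding e by (simp only: inj_on_insert) simp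
  show "?g ` {1..Suc k} = insert x (f ` {1..k})" unfolding e image_insert im by simp
qed

lemma biclq_ext:
  assumes "biclq E A (B - {v}) m q" "v \<in> B" "\<forall>u\<in>A. E u v"
  shows "biclq E A B m (Suc q)"
proof -
  obtain us vs where h: "inj_on us {1..m}" "us ` {1..m} \<subseteq> A"
    "inj_on vs {1..q}" "vs ` {1..q} \<subseteq> B - {v}"
    "\<forall>i\<in>{1..m}. \<forall>j\<in>{1..q}. E (us i) (vs j)"
    using assms(1) unfolding biclq_def by (elim exE conjE) (rule that; assumption)
  define vs' where "vs' = (\<lambda>j. if j = Suc q then v else vs j)"
  have "v \<notin> B - {v}" by simp
  note X = ext_fun[OF h(3) h(4) this, folded vs'_def]
  have "vs' ` {1..Suc q} \<subseteq> B" unfolding X(2) using h(4) assms(2) by blast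
  moreover have "\<forall>i\<in>{1..m}. \<forall>j\<in>{1..Suc q}. E (us i) (vs' j)"
  proof (intro ballI)
    fix i j assume i: "i \<in> {1..m}" and j: "j \<in> {1..Suc q}"
    show "E (us i) (vs' j)"
    proof (cases "j = Suc q")
      case True
      have "us i \<in> A" using i h(2) by blast
      then show ?thesis using True assms(3) by (simp add: vs'_def)
    next
      case False
      then have "j \<in> {1..q}" using j by simp
      then show ?thesis using i h(5) False by (simp add: vs'_def)
    qed
  qed
  ultimately show ?thesis unfolding biclq_def using h(1,2) X(1) by (intro exI[of _ us] exI[of _ vs'] conjI)
qed

lemma indm_ext:
  assumes "indm E A' B' k" "u1 \<in> A" "v1 \<in> B" "A' \<subseteq> A" "B' \<subseteq> B" "u1 \<notin> A'" "v1 \<notin> B'"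
    "E u1 v1" "\<forall>v\<in>B'. \<not> E u1 v" "\<forall>u\<in>A'. \<not> E u v1"
  shows "indm E A B (Suc k)"
proof -
  obtain us vs where h: "inj_on us {1..k}" "us ` {1..k} \<subseteq> A'"
    "inj_on vs {1..k}" "vs ` {1..k} \<subseteq> B'"
    "\<forall>i\<in>{1..k}. \<forall>j\<in>{1..k}. E (us i) (vs j) \<longleftrightarrow> i = j"
    using assms(1) unfolding indm_def by (elim exE conjE) (rule that; assumption)
  define us' where "us' = (\<lambda>j. if j = Suc k then u1 else us j)"
  define vs' where "vs' = (\<lambda>j. if j = Suc k then v1 else vs j)"
  note XU = ext_fun[OF h(1) h(2) assms(6), folded us'_def]
  note XV = ext_fun[OF h(3) h(4) assms(7), folded vs'_def]
  have su: "us' ` {1..Suc k} \<subseteq> A" unfolding XU(2) using h(2) assms(2,4) by blast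
  have sv: "vs' ` {1..Suc k} \<subseteq> B" unfolding XV(2) using h(4) assms(3,5) by blast
  have "\<forall>i\<in>{1..Suc k}. \<forall>j\<in>{1..Suc k}. E (us' i) (vs' j) \<longleftrightarrow> i = j"
  proof (intro ballI)
    fix i j assume i: "i \<in> {1..Suc k}" and j: "j \<in> {1..Suc k}"
    show "E (us' i) (vs' j) \<longleftrightarrow> i = j"
    proof (cases "i = Suc k")
      case True
      show ?thesis
      proof (cases "j = Suc k")
        case True then show ?thesis using \<open>i = Suc k\<close> assms(8) by (simp add: us'_def vs'_def)
      next
        case False
        then have "j \<in> {1..k}" using j by simp
        then have "vs j \<in> B'" using h(4) by blast
        then show ?thesis using True False assms(9) by (simp add: us'_def vs'_def)
      qed
    next
      case False
      then have i': "i \<in> {1..k}" using i by simp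
      then have "us i \<in> A'" using h(2) by blast
      show ?thesis
      proof (cases "j = Suc k")
        case True then show ?thesis using False \<open>us i \<in> A'\<close> assms(10) by (simp add: us'_def vs'_def)
      next
        case False2: False
        then have "j \<in> {1..k}" using j by simp
        then show ?thesis using h(5) i' False False2 by (simp add: us'_def vs'_def)
      qed
    qed
  qed
  then show ?thesis unfolding indm_def using XU(1) XV(1) su sv by (intro exI[of _ us'] exI[of _ vs'] conjI)
qed

lemma card_minus_one:
  assumes "finite X"
  shows "card X \<le> Suc (card (X - {w}))"
proof (cases "w \<in> X")
  case True then show ?thesis using card.remove[OF assms True] by simp
next
  case False then show ?thesis by simp
qed

lemma matching:
  assumes sg: "simple_graph V E"
  shows "A \<subseteq> V \<Longrightarrow> B \<subseteq> V \<Longrightarrow> \<forall>v\<in>B. card (nbhd E v \<inter> A) \<le> X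
     \<Longrightarrow> \<forall>u\<in>A. nbhd E u \<inter> B \<noteq> {} \<Longrightarrow> k * X < card A \<Longrightarrow> indm E A B (Suc k)"
proof (induction k arbitrary: A B)
  case 0
  then have "0 < card A" by simp
  then have "A \<noteq> {}" by auto
  then obtain u where u: "u \<in> A" by blast
  then obtain v where "v \<in> nbhd E u \<inter> B" using 0(4) by blast
  then show ?case using u by (intro indm_1[of E u v]) (auto simp: nbhd_def)
next
  case (Suc k)
  have finV: "finite V" using sg unfolding simple_graph_def by blast
  have sym: "\<And>x y. E x y \<Longrightarrow> E y x" using sg unfolding simple_graph_def by blast
  have finA: "finite A" using Suc.prems(1) finV finite_subset by blast
  have finB: "finite B" using Suc.prems(2) finV finite_subset by blast
  have "0 < card A" using Suc.prems(5) by simp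
  then have "A \<noteq> {}" by auto
  then obtain u0 where "u0 \<in> A" by blast
  then obtain u1 where u1: "u1 \<in> A" and u1min: "\<And>u. u \<in> A \<Longrightarrow> card (nbhd E u1 \<inter> B) \<le> card (nbhd E u \<inter> B)"
    using ex_has_least_nat[of "\<lambda>u. u \<in> A" u0 "\<lambda>u. card (nbhd E u \<inter> B)"] by blast
  obtain v1 where v1: "v1 \<in> nbhd E u1 \<inter> B" using Suc.prems(4) u1 by blast
  have Eu1v1: "E u1 v1" using v1 by (simp add: nbhd_def)
  define A' where "A' = A - nbhd E v1"
  define B' where "B' = B - nbhd E u1"
  have u1A': "u1 \<notin> A'" using Eu1v1 sym by (auto simp: A'_def nbhd_def)
  have v1B': "v1 \<notin> B'" using v1 by (simp add: B'_def)
  have A'A: "A' \<subseteq> A" by (auto simp: A'_def)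
  have B'B: "B' \<subseteq> B" by (auto simp: B'_def)
  have noE1: "\<forall>v\<in>B'. \<not> E u1 v" by (auto simp: B'_def nbhd_def)
  have noE2: "\<forall>u\<in>A'. \<not> E u v1" using sym by (auto simp: A'_def nbhd_def)
  have ne': "\<forall>u\<in>A'. nbhd E u \<inter> B' \<noteq> {}"
  proof
    fix u assume u: "u \<in> A'"
    show "nbhd E u \<inter> B' \<noteq> {}"
    proof
      assume emp: "nbhd E u \<inter> B' = {}"
      then have sub: "nbhd E u \<inter> B \<subseteq> nbhd E u1 \<inter> B" by (auto simp: B'_def)
      have "card (nbhd E u1 \<inter> B) \<le> card (nbhd E u \<inter> B)" using u A'A by (intro u1min) blast
      moreover have "finite (nbhd E u1 \<inter> B)" using finB by simp
      ultimately have "nbhd E u \<inter> B = nbhd E u1 \<inter> B" using sub card_subset_eq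
        by (metis antisym card_mono)
      then have "E u v1" using v1 by (auto simp: nbhd_def)
      then have "u \<in> nbhd E v1" using sym by (simp add: nbhd_def)
      then show False using u by (simp add: A'_def)
    qed
  qed
  have deg': "\<forall>v\<in>B'. card (nbhd E v \<inter> A') \<le> X"
  proof
    fix v assume v: "v \<in> B'"
    have "card (nbhd E v \<inter> A') \<le> card (nbhd E v \<inter> A)"
      by (rule card_mono) (use finA A'A in auto)
    also have "\<dots> \<le> X" using Suc.prems(3) v B'B by blast
    finally show "card (nbhd E v \<inter> A') \<le> X" .
  qed
  have finA': "finite A'" using finA A'A finite_subset by blast
  have c1: "card A \<le> card (A' \<union> (nbhd E v1 \<inter> A))"
    by (rule card_mono) (use finA' finA in \<open>auto simp: A'_def\<close>)
  have c2: "card (A' \<union> (nbhd E v1 \<inter> A)) \<le> card A' + card (nbhd E v1 \<inter> A)"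
    by (rule card_Un_le)
  have c3: "card (nbhd E v1 \<inter> A) \<le> X" using Suc.prems(3) v1 by blast
  have "Suc k * X < card A" by (rule Suc.prems(5))
  then have bnd: "k * X < card A'" using c1 c2 c3 by simp
  have subA': "A' \<subseteq> V" using A'A Suc.prems(1) by blast
  have subB': "B' \<subseteq> V" using B'B Suc.prems(2) by blast
  have "indm E A' B' (Suc k)" by (rule Suc.IH[OF subA' subB' deg' ne' bnd])
  then show ?case
    using u1 _ A'A B'B u1A' v1B' Eu1v1 noE1 noE2
  proof (rule indm_ext)
    show "v1 \<in> B" using v1 by blast
  qed
qed

lemma main:
  assumes sg: "simple_graph V E" and m1: "m \<ge> 1"
  shows "A \<subseteq> V \<Longrightarrow> B \<subseteq> V \<Longrightarrow> \<forall>u\<in>A. p \<le> card (nbhd E u \<inter> B)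
     \<Longrightarrow> (m - 1) * k ^ p < card A \<Longrightarrow> biclq E A B m p \<or> indm E A B (Suc k)"
proof (induction p arbitrary: A B)
  case 0
  have finA: "finite A" using 0(1) sg unfolding simple_graph_def by (metis finite_subset)
  have "m \<le> card A" using 0(4) m1 by simp
  then show ?case using biclq_p0[OF finA] by blast
next
  case (Suc q)
  have finV: "finite V" using sg unfolding simple_graph_def by blast
  have sym: "\<And>x y. E x y \<Longrightarrow> E y x" using sg unfolding simple_graph_def by blast
  have finA: "finite A" using Suc.prems(1) finV finite_subset by blast
  have finB: "finite B" using Suc.prems(2) finV finite_subset by blast
  define D where "D = (m - 1) * k ^ q"
  show ?case
  proof (cases "\<exists>v\<in>B. D < card (nbhd E v \<inter> A)")
    case True
    then obtain v where v: "v \<in> B" "D < card (nbhd E v \<inter> A)" by blast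
    let ?Av = "nbhd E v \<inter> A"
    have deg: "\<forall>u\<in>?Av. q \<le> card (nbhd E u \<inter> (B - {v}))"
    proof
      fix u assume u: "u \<in> ?Av"
      have fu: "finite (nbhd E u \<inter> B)" using finB by simp
      have eq: "nbhd E u \<inter> (B - {v}) = (nbhd E u \<inter> B) - {v}" by blast
      have "Suc q \<le> card (nbhd E u \<inter> B)" using Suc.prems(3) u by blast
      then show "q \<le> card (nbhd E u \<inter> (B - {v}))"
        using card_minus_one[OF fu, of v] unfolding eq by simp
    qed
    have sub1: "?Av \<subseteq> V" using Suc.prems(1) by blast
    have sub2: "B - {v} \<subseteq> V" using Suc.prems(2) by blast
    have "biclq E ?Av (B - {v}) m q \<or> indm E ?Av (B - {v}) (Suc k)"
      using Suc.IH[OF sub1 sub2 deg] v(2) unfolding D_def by blast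
    then show ?thesis
    proof
      assume b: "biclq E ?Av (B - {v}) m q"
      have "\<forall>u\<in>?Av. E u v" using sym by (auto simp: nbhd_def)
      with b v(1) have "biclq E ?Av B m (Suc q)" by (rule biclq_ext)
      then have "biclq E A B m (Suc q)" by (rule biclq_mono) auto
      then show ?thesis by blast
    next
      assume "indm E ?Av (B - {v}) (Suc k)"
      then have "indm E A B (Suc k)" by (rule indm_mono) auto
      then show ?thesis by blast
    qed
  next
    case False
    then have Dle: "\<forall>v\<in>B. card (nbhd E v \<inter> A) \<le> D" by (simp add: not_less)
    have ne: "\<forall>u\<in>A. nbhd E u \<inter> B \<noteq> {}"
    proof
      fix u assume "u \<in> A"
      then have "Suc q \<le> card (nbhd E u \<inter> B)" using Suc.prems(3) by blast
      then show "nbhd E u \<inter> B \<noteq> {}" by auto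
    qed
    have eq: "(m - 1) * k ^ Suc q = k * D" unfolding D_def power_Suc by (rule mult.left_commute)
    have "k * D < card A" using Suc.prems(4) unfolding eq .
    then have "indm E A B (Suc k)" by (rule matching[OF sg Suc.prems(1,2) Dle ne])
    then show ?thesis by blast
  qed
qed

theorem lemma3p14:
  fixes V :: "'a set" and E :: "'a \<Rightarrow> 'a \<Rightarrow> bool" and A B :: "'a set"
    and m n p :: nat
  assumes "m \<ge> 1" and "n \<ge> 1" and "p \<ge> 1"
    and "simple_graph V E"
    and "A \<subseteq> V" and "B \<subseteq> V" and "A \<inter> B = {}"
    and "\<forall>u\<in>A. card (nbhd E u \<inter> B) \<ge> p"
    and "card A > (m - 1) * (n - 1) ^ p"
  shows "(\<exists>us vs. inj_on us {1..m} \<and> us ` {1..m} \<subseteq> A \<and>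
                 inj_on vs {1..p} \<and> vs ` {1..p} \<subseteq> B \<and>
                 (\<forall>i\<in>{1..m}. \<forall>j\<in>{1..p}. E (us i) (vs j)))
       \<or> (\<exists>us vs. inj_on us {1..n} \<and> us ` {1..n} \<subseteq> A \<and>
                 inj_on vs {1..n} \<and> vs ` {1..n} \<subseteq> B \<and>
                 (\<forall>i\<in>{1..n}. \<forall>j\<in>{1..n}. E (us i) (vs j) \<longleftrightarrow> i = j))"
proof -
  have "biclq E A B m p \<or> indm E A B (Suc (n - 1))"
    using main[OF assms(4) assms(1) assms(5) assms(6), of p "n - 1"] assms(8,9) by blast
  moreover have "Suc (n - 1) = n" using assms(2) by simp
  ultimately show ?thesis unfolding biclq_def indm_def by simp
qed

end
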